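(* For any valuation profile $\mathbf u$ (of injective valuation functions of $n$ agents over $n$ items), every optimal allocation, i.e. every matching $\mu^*$ maximizing $\sum_i u_i(\mu_i)$, is an outcome of random priority with positive probability: there exists an ordering of the agents for which the serial-dictatorship procedure produces exactly $\mu^*$.
   Context: Agents $N=\{1,\dots,n\}$, items $M=\{1,\dots,n\}$, outcomes are bijections (matchings) $\mu$ with $\mu_i$ the item of agent $i$. Each agent $i$ has an injective valuation function $u_i:M\to\mathbb R$. Random priority picks a uniformly random ordering of agents and then, in that order, gives each agent its most preferred item among those still unassigned. *)

theory Defs
  imports Main "HOL-Library.Multiset" Complex_Main
begin

text \<open>Agents and items are both {1..n}. A valuation profile is u :: nat => nat => real,
  u i x being the value of agent i for item x.\<close>

definition valuation_profile :: "nat \<Rightarrow> (nat \<Rightarrow> nat \<Rightarrow> real) \<Rightarrow> bool" where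
  "valuation_profile n u \<longleftrightarrow> (\<forall>i\<in>{1..n}. inj_on (u i) {1..n})"

definition matching :: "nat \<Rightarrow> (nat \<Rightarrow> nat) \<Rightarrow> bool" where
  "matching n \<mu> \<longleftrightarrow> bij_betw \<mu> {1..n} {1..n}"

definition welfare :: "nat \<Rightarrow> (nat \<Rightarrow> nat \<Rightarrow> real) \<Rightarrow> (nat \<Rightarrow> nat) \<Rightarrow> real" where
  "welfare n u \<mu> = (\<Sum>i\<in>{1..n}. u i (\<mu> i))"

definition optimal_allocation :: "nat \<Rightarrow> (nat \<Rightarrow> nat \<Rightarrow> real) \<Rightarrow> (nat \<Rightarrow> nat) \<Rightarrow> bool" where
  "optimal_allocation n u \<mu> \<longleftrightarrow>
     matching n \<mu> \<and> (\<forall>\<nu>. matching n \<nu> \<longrightarrow> welfare n u \<nu> \<le> welfare n u \<mu>)"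

text \<open>Serial dictatorship: agents pick in the order of the list, each taking its most
  preferred item among the remaining items R. Agents not in the list get the dummy 0.\<close>

fun serial_dictatorship :: "(nat \<Rightarrow> nat \<Rightarrow> real) \<Rightarrow> nat set \<Rightarrow> nat list \<Rightarrow> (nat \<Rightarrow> nat)" where
  "serial_dictatorship u R [] = (\<lambda>_. 0)"
| "serial_dictatorship u R (i # is) =
     (let x = arg_max_on (u i) R in (serial_dictatorship u (R - {x}) is)(i := x))"

definition agent_ordering :: "nat \<Rightarrow> nat list \<Rightarrow> bool" where
  "agent_ordering n \<sigma> \<longleftrightarrow> distinct \<sigma> \<and> set \<sigma> = {1..n}"

end

theory Submission
  imports Defs
begin

lemma arg_max_on_eqI:
  fixes f :: "nat \<Rightarrow> real"
  assumes "a \<in> S" "\<forall>y\<in>S. f y \<le> f a" "inj_on f S"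
  shows "arg_max_on f S = a"
  unfolding arg_max_on_def arg_max_def
proof (rule someI2[of _ a])
  show "is_arg_max f (\<lambda>x. x \<in> S) a" using assms by (auto simp: is_arg_max_linorder)
next
  fix x assume "is_arg_max f (\<lambda>x. x \<in> S) x"
  then have "x \<in> S" "f x \<ge> f a" using assms(1) by (auto simp: is_arg_max_linorder)
  with assms have "f x = f a" by force
  with assms \<open>x \<in> S\<close> show "x = a" by (auto simp: inj_on_def)
qed

lemma closed_min:
  fixes g :: "nat \<Rightarrow> nat"
  assumes "finite A" "A \<noteq> {}" "g ` A \<subseteq> A"
  shows "\<exists>C. C \<subseteq> A \<and> C \<noteq> {} \<and> g ` C = C"
proof -
  let ?P = "\<lambda>C. C \<subseteq> A \<and> C \<noteq> {} \<and> g ` C \<subseteq> C"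
  obtain C where C: "?P C" and mn: "\<And>D. ?P D \<Longrightarrow> card C \<le> card D"
    using ex_has_least_nat[of ?P A card] assms by blast
  have fC: "finite C" using C assms finite_subset by blast
  have "?P (g ` C)" using C by auto
  then have "card C \<le> card (g ` C)" by (rule mn)
  moreover have "g ` C \<subseteq> C" using C by auto
  ultimately have "g ` C = C" using fC by (meson card_seteq)
  with C show ?thesis by blast
qed

lemma key:
  assumes vp: "valuation_profile n u" and opt: "optimal_allocation n u \<mu>"
    and A: "A \<subseteq> {1..n}" "A \<noteq> {}"
  shows "\<exists>i\<in>A. \<forall>y\<in>\<mu> ` A. u i y \<le> u i (\<mu> i)"
proof (rule ccontr)
  assume "\<not> ?thesis"
  then have "\<forall>i\<in>A. \<exists>j\<in>A. u i (\<mu> i) < u i (\<mu> j)" by (auto simp: not_le)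
  then obtain g where g: "\<forall>i\<in>A. g i \<in> A \<and> u i (\<mu> i) < u i (\<mu> (g i))"
    by (metis (no_types, lifting) bchoice)
  have gA: "g ` A \<subseteq> A" using g by blast
  have fA: "finite A" using A finite_subset by blast
  obtain C where C: "C \<subseteq> A" "C \<noteq> {}" "g ` C = C"
    using closed_min[OF fA A(2) gA] by blast
  have gC: "\<And>x. x \<in> C \<Longrightarrow> g x \<in> C" using C(3) by blast
  have gN: "\<And>x. x \<in> C \<Longrightarrow> g x \<in> {1..n}" using gC C(1) A(1) by blast
  have fC: "finite C" using C fA finite_subset by blast
  have injg: "inj_on g C" using C fC by (simp add: eq_card_imp_inj_on)
  have bm: "bij_betw \<mu> {1..n} {1..n}" using opt by (simp add: optimal_allocation_def matching_def)
  then have injm: "inj_on \<mu> {1..n}" and im: "\<mu> ` {1..n} = {1..n}" by (auto simp: bij_betw_def)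
  define \<nu> where "\<nu> i = (if i \<in> C then \<mu> (g i) else \<mu> i)" for i
  have inj\<nu>: "inj_on \<nu> {1..n}"
  proof (rule inj_onI)
    fix x y assume xy: "x \<in> {1..n}" "y \<in> {1..n}" "\<nu> x = \<nu> y"
    have gx: "x \<in> C \<Longrightarrow> g x \<in> C \<and> g x \<in> {1..n}" using gC gN by blast
    have gy: "y \<in> C \<Longrightarrow> g y \<in> C \<and> g y \<in> {1..n}" using gC gN by blast
    show "x = y"
    proof (cases "x \<in> C"; cases "y \<in> C")
      assume a: "x \<in> C" "y \<in> C"
      then have "\<mu> (g x) = \<mu> (g y)" using xy(3) by (simp add: \<nu>_def)
      then have "g x = g y" using inj_onD[OF injm] gx gy a by blast
      then show ?thesis using inj_onD[OF injg] a by blast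
    next
      assume a: "x \<in> C" "y \<notin> C"
      then have "\<mu> (g x) = \<mu> y" using xy(3) by (simp add: \<nu>_def)
      then have "g x = y" using inj_onD[OF injm] gx xy(2) a by blast
      then show ?thesis using gx a by blast
    next
      assume a: "x \<notin> C" "y \<in> C"
      then have "\<mu> x = \<mu> (g y)" using xy(3) by (simp add: \<nu>_def)
      then have "x = g y" using inj_onD[OF injm] gy xy(1) a by blast
      then show ?thesis using gy a by blast
    next
      assume a: "x \<notin> C" "y \<notin> C"
      then have "\<mu> x = \<mu> y" using xy(3) by (simp add: \<nu>_def)
      then show ?thesis using inj_onD[OF injm] xy by blast
    qed
  qed
  have sub: "\<nu> ` {1..n} \<subseteq> {1..n}"
  proof
    fix y assume "y \<in> \<nu> ` {1..n}"
    then obtain x where x: "x \<in> {1..n}" "y = \<nu> x" by blast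
    show "y \<in> {1..n}"
    proof (cases "x \<in> C")
      case True then have "g x \<in> {1..n}" using gN by blast
      then show ?thesis using x True im by (auto simp: \<nu>_def)
    next
      case False then show ?thesis using x im by (auto simp: \<nu>_def)
    qed
  qed
  have "\<nu> ` {1..n} = {1..n}" using endo_inj_surj[OF _ sub inj\<nu>] by simp
  then have "matching n \<nu>" using inj\<nu> by (simp add: matching_def bij_betw_def)
  then have le: "welfare n u \<nu> \<le> welfare n u \<mu>" using opt by (simp add: optimal_allocation_def)
  have "welfare n u \<mu> < welfare n u \<nu>"
    unfolding welfare_def
  proof (rule sum_strict_mono_ex1)
    show "\<forall>x\<in>{1..n}. u x (\<mu> x) \<le> u x (\<nu> x)"
      using g C(1) by (auto simp: \<nu>_def less_imp_le)
    obtain c where "c \<in> C" using C by blast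
    then show "\<exists>a\<in>{1..n}. u a (\<mu> a) < u a (\<nu> a)"
      using g C(1) A(1) by (intro bexI[of _ c]) (auto simp: \<nu>_def)
  qed simp
  with le show False by simp
qed

lemma gen:
  assumes vp: "valuation_profile n u" and opt: "optimal_allocation n u \<mu>"
  shows "card A = k \<Longrightarrow> A \<subseteq> {1..n} \<Longrightarrow> \<exists>\<sigma>. distinct \<sigma> \<and> set \<sigma> = A \<and>
           (\<forall>i\<in>A. serial_dictatorship u (\<mu> ` A) \<sigma> i = \<mu> i)"
proof (induction k arbitrary: A)
  case 0
  then have "A = {}" using finite_subset by fastforce
  then show ?case by (intro exI[of _ "[]"]) simp
next
  case (Suc k)
  have fA: "finite A" using Suc.prems finite_subset by blast
  then have "A \<noteq> {}" using Suc.prems by auto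
  then obtain i where i: "i \<in> A" "\<forall>y\<in>\<mu> ` A. u i y \<le> u i (\<mu> i)"
    using key[OF vp opt Suc.prems(2)] by blast
  have injm: "inj_on \<mu> {1..n}" using opt
    by (simp add: optimal_allocation_def matching_def bij_betw_def)
  have injmA: "inj_on \<mu> A" using injm Suc.prems(2) inj_on_subset by blast
  have ui: "inj_on (u i) (\<mu> ` A)"
  proof -
    have "\<mu> ` A \<subseteq> {1..n}" using opt Suc.prems(2)
      by (auto simp: optimal_allocation_def matching_def bij_betw_def)
    moreover have "inj_on (u i) {1..n}" using vp i Suc.prems(2) by (auto simp: valuation_profile_def)
    ultimately show ?thesis using inj_on_subset by blast
  qed
  have am: "arg_max_on (u i) (\<mu> ` A) = \<mu> i"
    using arg_max_on_eqI[OF _ i(2) ui] i by blast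
  obtain \<sigma> where \<sigma>: "distinct \<sigma>" "set \<sigma> = A - {i}"
    "\<forall>j\<in>A - {i}. serial_dictatorship u (\<mu> ` (A - {i})) \<sigma> j = \<mu> j"
    using Suc.IH[of "A - {i}"] Suc.prems i fA by auto
  have eq: "\<mu> ` A - {\<mu> i} = \<mu> ` (A - {i})" using injmA i by (auto simp: inj_on_def)
  show ?case
    using \<sigma> i by (intro exI[of _ "i # \<sigma>"]) (auto simp: am eq)
qed

theorem lemma2:
  fixes n :: nat and u :: "nat \<Rightarrow> nat \<Rightarrow> real" and \<mu> :: "nat \<Rightarrow> nat"
  assumes "valuation_profile n u"
    and "optimal_allocation n u \<mu>"
  shows "\<exists>\<sigma>. agent_ordering n \<sigma> \<and>
           (\<forall>i\<in>{1..n}. serial_dictatorship u {1..n} \<sigma> i = \<mu> i)"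
proof -
  have "\<mu> ` {1..n} = {1..n}" using assms(2)
    by (simp add: optimal_allocation_def matching_def bij_betw_def)
  with gen[OF assms, of "{1..n}" "card {1..n}"] show ?thesis
    by (auto simp: agent_ordering_def)
qed

end
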